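(* Let $\Omega\subset\mathbb R^N$ be bounded and open, and $u\in\widetilde W^{s,p}(\Omega)\cap C^{1,\gamma}_{loc}(\Omega)$ with $\gamma\in[0,1]$ satisfying $$\gamma>1-p(1-s)\ \text{ if }p\ge2,\qquad \gamma>\frac{1-p(1-s)}{p-1}\ \text{ if }1<p<2.$$ Then there is $f\in L^\infty_{loc}(\Omega)$ such that $u$ is a strong solution of $(-\Delta)^s_pu=f$ in $\Omega$.
   Context: Fixed $s\in(0,1)$, $p\in(1,\infty)$. $a^q:=|a|^{q-1}a$. $\widetilde W^{s,p}(\Omega)$: $u\in L^p_{loc}(\mathbb R^N)$ with $u\in W^{s,p}(U)$ for some bounded open $U\supset\overline\Omega$ and $\int_{\mathbb R^N}\frac{|u|^{p-1}}{(1+|x|)^{N+ps}}dx<\infty$. Strong solution: $2\int_{\mathbb R^N\setminus B_\varepsilon(x)}\frac{(u(x)-u(y))^{p-1}}{|x-y|^{N+ps}}dy\to f$ in $L^1_{loc}(\Omega)$ as $\varepsilon\to0^+$. *)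

theory Defs
  imports "HOL-Analysis.Analysis"
begin

definition spow :: "real \<Rightarrow> real \<Rightarrow> real" where
  "spow a q = \<bar>a\<bar> powr (q - 1) * a"

definition in_Wsp :: "real \<Rightarrow> real \<Rightarrow> 'a::euclidean_space set \<Rightarrow> ('a \<Rightarrow> real) \<Rightarrow> bool" where
  "in_Wsp s p U u \<longleftrightarrow>
     set_borel_measurable lebesgue U u \<and>
     (\<integral>\<^sup>+ x. ennreal (indicator U x * \<bar>u x\<bar> powr p) \<partial>lebesgue) < \<infinity> \<and>
     (\<integral>\<^sup>+ z. ennreal (indicator (U \<times> U) z *
          (\<bar>u (fst z) - u (snd z)\<bar> powr p / norm (fst z - snd z) powr (real DIM('a) + p * s)))
        \<partial>(lebesgue \<Otimes>\<^sub>M lebesgue)) < \<infinity>"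

definition in_Lp_loc :: "real \<Rightarrow> ('a::euclidean_space \<Rightarrow> real) \<Rightarrow> bool" where
  "in_Lp_loc p u \<longleftrightarrow> u \<in> borel_measurable lebesgue \<and>
     (\<forall>K. compact K \<longrightarrow> (\<integral>\<^sup>+ x. ennreal (indicator K x * \<bar>u x\<bar> powr p) \<partial>lebesgue) < \<infinity>)"

definition in_tWsp :: "real \<Rightarrow> real \<Rightarrow> 'a::euclidean_space set \<Rightarrow> ('a \<Rightarrow> real) \<Rightarrow> bool" where
  "in_tWsp s p \<Omega> u \<longleftrightarrow> in_Lp_loc p u \<and>
     (\<exists>U. bounded U \<and> open U \<and> closure \<Omega> \<subseteq> U \<and> in_Wsp s p U u) \<and>
     (\<integral>\<^sup>+ x. ennreal (\<bar>u x\<bar> powr (p - 1) / (1 + norm x) powr (real DIM('a) + p * s)) \<partial>lebesgue) < \<infinity>"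

definition in_C1gamma_loc :: "real \<Rightarrow> 'a::euclidean_space set \<Rightarrow> ('a \<Rightarrow> real) \<Rightarrow> bool" where
  "in_C1gamma_loc \<gamma> \<Omega> u \<longleftrightarrow>
     (\<exists>Du :: 'a \<Rightarrow> 'a.
        (\<forall>x\<in>\<Omega>. (u has_derivative (\<lambda>h. Du x \<bullet> h)) (at x)) \<and>
        continuous_on \<Omega> Du \<and>
        (\<forall>K. compact K \<and> K \<subseteq> \<Omega> \<longrightarrow>
           (\<exists>C. \<forall>x\<in>K. \<forall>y\<in>K. norm (Du x - Du y) \<le> C * norm (x - y) powr \<gamma>)))"

definition in_Linf_loc :: "'a::euclidean_space set \<Rightarrow> ('a \<Rightarrow> real) \<Rightarrow> bool" where
  "in_Linf_loc \<Omega> f \<longleftrightarrow> set_borel_measurable lebesgue \<Omega> f \<and>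
     (\<forall>K. compact K \<and> K \<subseteq> \<Omega> \<longrightarrow> (\<exists>C. AE x in lebesgue. x \<in> K \<longrightarrow> \<bar>f x\<bar> \<le> C))"

definition frac_trunc :: "real \<Rightarrow> real \<Rightarrow> ('a::euclidean_space \<Rightarrow> real) \<Rightarrow> real \<Rightarrow> 'a \<Rightarrow> real" where
  "frac_trunc s p u \<epsilon> x = 2 * (\<integral>y. indicator (- ball x \<epsilon>) y *
       (spow (u x - u y) (p - 1) / norm (x - y) powr (real DIM('a) + p * s)) \<partial>lebesgue)"

definition strong_solution :: "real \<Rightarrow> real \<Rightarrow> 'a::euclidean_space set \<Rightarrow> ('a \<Rightarrow> real) \<Rightarrow> ('a \<Rightarrow> real) \<Rightarrow> bool" where
  "strong_solution s p \<Omega> u f \<longleftrightarrow>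
     (\<forall>K. compact K \<and> K \<subseteq> \<Omega> \<longrightarrow>
        (\<forall>\<^sub>F \<epsilon> in at_right 0. set_integrable lebesgue K (\<lambda>x. frac_trunc s p u \<epsilon> x - f x)) \<and>
        ((\<lambda>\<epsilon>. \<integral>x. indicator K x * \<bar>frac_trunc s p u \<epsilon> x - f x\<bar> \<partial>lebesgue) \<longlongrightarrow> 0) (at_right 0))"

end

theory Submission
  imports Defs
begin

lemma sigma_finite_lebesgue: "sigma_finite_measure (lebesgue :: 'a::euclidean_space measure)"
proof
  show "\<exists>A. countable A \<and> A \<subseteq> sets (lebesgue::'a measure) \<and> \<Union> A = space lebesgue \<and> (\<forall>a\<in>A. emeasure lebesgue a \<noteq> \<infinity>)"
  proof (intro exI conjI)
    show "countable (range (\<lambda>n::nat. ball (0::'a) (real n)))" by simp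
    show "range (\<lambda>n::nat. ball (0::'a) (real n)) \<subseteq> sets lebesgue" by auto
    show "\<Union> (range (\<lambda>n::nat. ball (0::'a) (real n))) = space lebesgue"
    proof -
      have "y \<in> (\<Union>n. ball (0::'a) (real n))" for y
        using reals_Archimedean2[of "norm y"] by auto
      then show ?thesis by auto
    qed
    show "\<forall>a\<in>range (\<lambda>n::nat. ball (0::'a) (real n)). emeasure lebesgue a \<noteq> \<infinity>"
      by (auto simp: emeasure_ball)
  qed
qed

lemma shell_bound:
  fixes x :: "'a::euclidean_space" and r \<beta> :: real
  assumes r: "r > 0"
  shows "(\<integral>\<^sup>+y. ennreal (indicator {y. r \<le> dist x y \<and> dist x y < 2*r} y * dist x y powr \<beta>) \<partial>lebesgue)
     \<le> ennreal (unit_ball_vol (DIM('a)) * 2 ^ DIM('a) * 2 powr \<bar>\<beta>\<bar> * r powr (DIM('a) + \<beta>))"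
proof -
  have pw: "ennreal (indicator {y. r \<le> dist x y \<and> dist x y < 2*r} y * dist x y powr \<beta>)
      \<le> ennreal (2 powr \<bar>\<beta>\<bar> * r powr \<beta>) * indicator (ball x (2*r)) y" for y
  proof (cases "r \<le> dist x y \<and> dist x y < 2*r")
    case True
    then have d: "r \<le> dist x y" "dist x y < 2*r" by auto
    have "dist x y powr \<beta> \<le> 2 powr \<bar>\<beta>\<bar> * r powr \<beta>"
    proof (cases "\<beta> \<ge> 0")
      case True
      have "dist x y powr \<beta> \<le> (2*r) powr \<beta>" using d r True by (intro powr_mono2) auto
      also have "\<dots> = 2 powr \<bar>\<beta>\<bar> * r powr \<beta>" using True r by (simp add: powr_mult)
      finally show ?thesis .
    next
      case False
      have "dist x y powr \<beta> \<le> r powr \<beta>" using d r False by (intro powr_mono2') auto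
      also have "\<dots> \<le> 2 powr \<bar>\<beta>\<bar> * r powr \<beta>"
      proof -
        have h1: "1 \<le> 2 powr \<bar>\<beta>\<bar>" by (rule ge_one_powr_ge_zero) auto
        show ?thesis using mult_right_mono[OF h1 powr_ge_zero[of r \<beta>]] by simp
      qed
      finally show ?thesis .
    qed
    then show ?thesis using True by (auto simp: indicator_def dist_commute intro!: ennreal_leI)
  qed (auto simp: indicator_def)
  have "(\<integral>\<^sup>+y. ennreal (indicator {y. r \<le> dist x y \<and> dist x y < 2*r} y * dist x y powr \<beta>) \<partial>lebesgue)
      \<le> (\<integral>\<^sup>+y. ennreal (2 powr \<bar>\<beta>\<bar> * r powr \<beta>) * indicator (ball x (2*r)) y \<partial>lebesgue)"
    by (intro nn_integral_mono pw)
  also have "\<dots> = ennreal (2 powr \<bar>\<beta>\<bar> * r powr \<beta>) * emeasure lebesgue (ball x (2*r))"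
    by (simp add: nn_integral_cmult_indicator)
  also have "\<dots> = ennreal (2 powr \<bar>\<beta>\<bar> * r powr \<beta>) * ennreal (unit_ball_vol (DIM('a)) * (2*r) ^ DIM('a))"
    using r by (simp add: emeasure_ball)
  also have "\<dots> = ennreal (unit_ball_vol (DIM('a)) * 2 ^ DIM('a) * 2 powr \<bar>\<beta>\<bar> * r powr (DIM('a) + \<beta>))"
    using r by (simp add: ennreal_mult'[symmetric] powr_add powr_realpow power_mult_distrib mult_ac)
  finally show ?thesis .
qed

lemma ennreal_term_le_suminf: "(f k :: ennreal) \<le> (\<Sum>i. f i)"
  using sum_le_suminf[of f "{k}"] by (simp add: summableI)

lemma powr_power_base: "0 < (c::real) \<Longrightarrow> (c ^ n) powr t = (c powr t) ^ n"
  by (induction n) (auto simp: powr_mult)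

lemma shell_meas:
  fixes x :: "'a::euclidean_space"
  shows "(\<lambda>y. ennreal (indicator {y. a \<le> dist x y \<and> dist x y < b} y * dist x y powr \<beta>)) \<in> borel_measurable lebesgue"
proof -
  have "(\<lambda>y. indicator {y. a \<le> dist x y \<and> dist x y < b} y * dist x y powr \<beta>) \<in> borel_measurable borel"
    by measurable
  then show ?thesis by (simp add: measurable_completion)
qed

lemma inner_radial:
  fixes \<tau> :: real
  assumes \<tau>: "\<tau> > 0"
  shows "\<exists>C\<ge>0. \<forall>(x::'a::euclidean_space) \<epsilon>. \<epsilon> > 0 \<longrightarrow> (\<integral>\<^sup>+y. ennreal (indicator (ball x \<epsilon>) y * dist x y powr (\<tau> - DIM('a))) \<partial>lebesgue)
            \<le> ennreal (C * \<epsilon> powr \<tau>)"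
proof -
  define \<beta> where "\<beta> = \<tau> - DIM('a)"
  define A where "A = unit_ball_vol (DIM('a)) * 2 ^ DIM('a) * 2 powr \<bar>\<beta>\<bar>"
  define q where "q = (1/2::real) powr \<tau>"
  have q: "0 < q" "q < 1" using \<tau> by (auto simp: q_def powr_divide gr_one_powr)
  have A: "A \<ge> 0" by (simp add: A_def)
  show ?thesis
  proof (intro exI allI impI conjI)
    show "0 \<le> A * (q / (1 - q))" using A q by simp
    fix x :: 'a and \<epsilon> :: real assume e: "\<epsilon> > 0"
    define r where "r k = \<epsilon> * (1/2) ^ Suc k" for k
    have r: "r k > 0" for k using e by (simp add: r_def)
    define S where "S k = {y. r k \<le> dist x y \<and> dist x y < 2 * r k}" for k
    have pw: "ennreal (indicator (ball x \<epsilon>) y * dist x y powr \<beta>)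
        \<le> (\<Sum>k. ennreal (indicator (S k) y * dist x y powr \<beta>))" for y
    proof (cases "y \<in> ball x \<epsilon> \<and> y \<noteq> x")
      case True
      then have d: "0 < dist x y" "dist x y < \<epsilon>" by auto
      have ex: "\<exists>n. \<epsilon> * (1/2)^n \<le> dist x y"
      proof -
        obtain n where "(1/2::real)^n < dist x y / \<epsilon>" using real_arch_pow_inv[of "dist x y / \<epsilon>" "1/2"] d e by auto
        then show ?thesis using e by (auto simp: field_simps intro!: exI[of _ n])
      qed
      define n where "n = (LEAST n. \<epsilon> * (1/2)^n \<le> dist x y)"
      have n1: "\<epsilon> * (1/2)^n \<le> dist x y" unfolding n_def by (rule LeastI_ex[OF ex])
      have n0: "n \<noteq> 0"
      proof
        assume "n = 0" then show False using n1 d by simp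
      qed
      then obtain k where k: "n = Suc k" by (cases n) auto
      have "\<not> \<epsilon> * (1/2)^k \<le> dist x y" using not_less_Least[of k "\<lambda>n. \<epsilon> * (1/2)^n \<le> dist x y"] k n_def by auto
      then have "y \<in> S k" using n1 k by (auto simp: S_def r_def)
      then show ?thesis
        using ennreal_term_le_suminf[of "\<lambda>k. ennreal (indicator (S k) y * dist x y powr \<beta>)" k] True
        by (auto simp: indicator_def)
    qed (auto simp: indicator_def)
    have "(\<integral>\<^sup>+y. ennreal (indicator (ball x \<epsilon>) y * dist x y powr \<beta>) \<partial>lebesgue)
        \<le> (\<integral>\<^sup>+y. (\<Sum>k. ennreal (indicator (S k) y * dist x y powr \<beta>)) \<partial>lebesgue)"
      by (intro nn_integral_mono pw)
    also have "\<dots> = (\<Sum>k. \<integral>\<^sup>+y. ennreal (indicator (S k) y * dist x y powr \<beta>) \<partial>lebesgue)"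
      unfolding S_def by (intro nn_integral_suminf shell_meas)
    also have "\<dots> \<le> (\<Sum>k. ennreal (A * \<epsilon> powr \<tau> * q ^ Suc k))"
    proof (intro suminf_le allI)
      fix k
      have "(\<integral>\<^sup>+y. ennreal (indicator (S k) y * dist x y powr \<beta>) \<partial>lebesgue) \<le> ennreal (A * r k powr (DIM('a) + \<beta>))"
        using shell_bound[OF r[of k], of x \<beta>] by (simp add: S_def A_def)
      also have "r k powr (DIM('a) + \<beta>) = (\<epsilon> * (1/2)^Suc k) powr \<tau>" by (simp add: \<beta>_def r_def)
      also have "\<dots> = \<epsilon> powr \<tau> * ((1/2)^Suc k) powr \<tau>" using e powr_mult[of \<epsilon> "(1/2)^Suc k" \<tau>] by simp
      also have "\<dots> = \<epsilon> powr \<tau> * q ^ Suc k" using powr_power_base[of "1/2::real" "Suc k" \<tau>] by (simp add: q_def)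
      finally show "(\<integral>\<^sup>+y. ennreal (indicator (S k) y * dist x y powr \<beta>) \<partial>lebesgue) \<le> ennreal (A * \<epsilon> powr \<tau> * q ^ Suc k)"
        by (simp add: mult_ac)
    qed (auto simp: summableI)
    also have "\<dots> = ennreal (A * \<epsilon> powr \<tau> * (q / (1 - q)))"
    proof (rule suminf_ennreal_eq)
      show "0 \<le> A * \<epsilon> powr \<tau> * q ^ Suc k" for k using A q by simp
      have "(\<lambda>k. q ^ k) sums (1 / (1 - q))" using q by (intro geometric_sums) auto
      then have "(\<lambda>k. (A * \<epsilon> powr \<tau> * q) * q ^ k) sums ((A * \<epsilon> powr \<tau> * q) * (1 / (1 - q)))"
        by (rule sums_mult)
      then show "(\<lambda>k. A * \<epsilon> powr \<tau> * q ^ Suc k) sums (A * \<epsilon> powr \<tau> * (q / (1 - q)))"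
        by (simp add: mult_ac)
    qed
    finally show "(\<integral>\<^sup>+y. ennreal (indicator (ball x \<epsilon>) y * dist x y powr (\<tau> - DIM('a))) \<partial>lebesgue)
            \<le> ennreal ((A * (q / (1 - q))) * \<epsilon> powr \<tau>)"
      by (simp add: \<beta>_def mult_ac)
  qed
qed

lemma outer_radial:
  fixes x :: "'a::euclidean_space" and \<alpha> R :: real
  assumes \<alpha>: "\<alpha> > DIM('a)" and R: "R > 0"
  shows "(\<integral>\<^sup>+y. ennreal (indicator (- ball x R) y * dist x y powr (- \<alpha>)) \<partial>lebesgue) < \<infinity>"
proof -
  define \<beta> where "\<beta> = - \<alpha>"
  define A where "A = unit_ball_vol (DIM('a)) * 2 ^ DIM('a) * 2 powr \<bar>\<beta>\<bar>"
  define q where "q = (2::real) powr (DIM('a) - \<alpha>)"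
  have q: "0 < q" "q < 1" using \<alpha> by (auto simp: q_def powr_less_one)
  have A: "A \<ge> 0" by (simp add: A_def)
  define r where "r k = R * 2 ^ k" for k
  have r: "r k > 0" for k using R by (simp add: r_def)
  define S where "S k = {y. r k \<le> dist x y \<and> dist x y < 2 * r k}" for k
  have pw: "ennreal (indicator (- ball x R) y * dist x y powr \<beta>)
      \<le> (\<Sum>k. ennreal (indicator (S k) y * dist x y powr \<beta>))" for y
  proof (cases "y \<in> - ball x R")
    case True
    then have d: "R \<le> dist x y" by auto
    have ex: "\<exists>n. dist x y < R * 2^n"
    proof -
      obtain n where "dist x y / R < 2^n" using real_arch_pow[of 2 "dist x y / R"] by auto
      then show ?thesis using R by (auto simp: field_simps intro!: exI[of _ n])
    qed
    define n where "n = (LEAST n. dist x y < R * 2^n)"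
    have n1: "dist x y < R * 2^n" unfolding n_def by (rule LeastI_ex[OF ex])
    have n0: "n \<noteq> 0"
    proof
      assume "n = 0" then show False using n1 d by simp
    qed
    then obtain k where k: "n = Suc k" by (cases n) auto
    have "\<not> dist x y < R * 2^k" using not_less_Least[of k "\<lambda>n. dist x y < R * 2^n"] k n_def by auto
    then have "y \<in> S k" using n1 k by (auto simp: S_def r_def)
    then show ?thesis
      using ennreal_term_le_suminf[of "\<lambda>k. ennreal (indicator (S k) y * dist x y powr \<beta>)" k] True
      by (auto simp: indicator_def)
  qed (auto simp: indicator_def)
  have "(\<integral>\<^sup>+y. ennreal (indicator (- ball x R) y * dist x y powr \<beta>) \<partial>lebesgue)
      \<le> (\<integral>\<^sup>+y. (\<Sum>k. ennreal (indicator (S k) y * dist x y powr \<beta>)) \<partial>lebesgue)"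
    by (intro nn_integral_mono pw)
  also have "\<dots> = (\<Sum>k. \<integral>\<^sup>+y. ennreal (indicator (S k) y * dist x y powr \<beta>) \<partial>lebesgue)"
    unfolding S_def by (intro nn_integral_suminf shell_meas)
  also have "\<dots> \<le> (\<Sum>k. ennreal (A * R powr (DIM('a) - \<alpha>) * q ^ k))"
  proof (intro suminf_le allI)
    fix k
    have "(\<integral>\<^sup>+y. ennreal (indicator (S k) y * dist x y powr \<beta>) \<partial>lebesgue) \<le> ennreal (A * r k powr (DIM('a) + \<beta>))"
      using shell_bound[OF r[of k], of x \<beta>] by (simp add: S_def A_def)
    also have "r k powr (DIM('a) + \<beta>) = R powr (DIM('a) - \<alpha>) * q ^ k"
      using R by (simp add: \<beta>_def r_def powr_mult powr_power_base q_def)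
    finally show "(\<integral>\<^sup>+y. ennreal (indicator (S k) y * dist x y powr \<beta>) \<partial>lebesgue) \<le> ennreal (A * R powr (DIM('a) - \<alpha>) * q ^ k)"
      by (simp add: mult_ac)
  qed (auto simp: summableI)
  also have "\<dots> = ennreal (A * R powr (DIM('a) - \<alpha>) * (1 / (1 - q)))"
  proof (rule suminf_ennreal_eq)
    show "0 \<le> A * R powr (DIM('a) - \<alpha>) * q ^ k" for k using A q by simp
    have "(\<lambda>k. q ^ k) sums (1 / (1 - q))" using q by (intro geometric_sums) auto
    then show "(\<lambda>k. A * R powr (DIM('a) - \<alpha>) * q ^ k) sums (A * R powr (DIM('a) - \<alpha>) * (1 / (1 - q)))"
      by (rule sums_mult)
  qed
  also have "\<dots> < \<infinity>" by simp
  finally show ?thesis by (simp add: \<beta>_def)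
qed

lemma spow_nonneg: "0 \<le> a \<Longrightarrow> spow a e = a powr e"
  unfolding spow_def
  by (cases "a = 0") (auto simp: powr_add[of a "e - 1" 1, simplified])

lemma spow_neg: "spow (- a) e = - spow a e"
  unfolding spow_def by simp

lemma spow_abs: "\<bar>spow a e\<bar> = \<bar>a\<bar> powr e"
  unfolding spow_def
  by (cases "a = 0") (auto simp: abs_mult powr_add[of "\<bar>a\<bar>" "e - 1" 1, simplified])

lemma powr_subadd:
  fixes x y e :: real
  assumes "0 \<le> x" "0 \<le> y" "0 < e" "e \<le> 1"
  shows "(x + y) powr e \<le> x powr e + y powr e"
proof (cases "x + y = 0")
  case True then show ?thesis using assms by auto
next
  case False
  then have s: "x + y > 0" using assms by auto
  have "x / (x+y) \<le> (x / (x+y)) powr e"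
    using powr_mono'[of e 1 "x/(x+y)"] assms s by auto
  moreover have "y / (x+y) \<le> (y / (x+y)) powr e"
    using powr_mono'[of e 1 "y/(x+y)"] assms s by auto
  moreover have "x/(x+y) + y/(x+y) = 1" using s by (simp add: add_divide_distrib[symmetric])
  ultimately have "1 \<le> (x / (x+y)) powr e + (y / (x+y)) powr e"
    by linarith
  then have "1 \<le> (x powr e + y powr e) / (x+y) powr e"
    using assms s by (simp add: powr_divide add_divide_distrib)
  then show ?thesis using s by (simp add: field_simps)
qed

lemma core_small:
  fixes a b e :: real
  assumes "0 \<le> b" "b \<le> a" "0 < e" "e \<le> 1"
  shows "a powr e - b powr e \<le> (a - b) powr e"
  using powr_subadd[of "a - b" b e] assms by simp

lemma core_large:
  fixes a b e :: real
  assumes "0 \<le> b" "b \<le> a" "1 \<le> e"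
  shows "a powr e - b powr e \<le> e * a powr (e - 1) * (a - b)"
proof (cases "b = 0")
  case True
  have "a powr e = a powr (e - 1) * a"
    using assms by (cases "a = 0") (auto simp: powr_add[of a "e - 1" 1, simplified])
  then show ?thesis using True assms mult_right_mono[of 1 e "a powr (e-1) * a"]
    by (simp add: mult.assoc)
next
  case False
  then have b: "b > 0" using assms by auto
  show ?thesis
  proof (cases "b = a")
    case True then show ?thesis by simp
  next
    case False
    then have ba: "b < a" using assms by auto
    have cont: "continuous_on {b..a} (\<lambda>t. t powr e)"
      using b by (intro continuous_on_powr') (auto intro: continuous_intros)
    have diff: "(\<lambda>t. t powr e) differentiable (at t)" if "b < t" for t
      using has_real_derivative_powr[of t e] that b real_differentiable_def by fastforce
    obtain l z where z: "b < z" "z < a" "DERIV (\<lambda>t. t powr e) z :> l"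
      "a powr e - b powr e = (a - b) * l"
      using MVT[OF ba cont diff] by auto
    have "l = e * z powr (e - 1)"
      using DERIV_unique[OF z(3) has_real_derivative_powr[of z e]] b z by auto
    moreover have "z powr (e - 1) \<le> a powr (e - 1)"
      using z b assms by (intro powr_mono2) auto
    ultimately show ?thesis using z assms ba
      by (simp add: mult_ac mult_left_mono)
  qed
qed

lemma spow_diff_small:
  fixes a b e :: real
  assumes e: "0 < e" "e \<le> 1"
  shows "\<bar>spow a e - spow b e\<bar> \<le> 2 * \<bar>a - b\<bar> powr e"
proof -
  have same: "\<bar>spow a e - spow b e\<bar> \<le> \<bar>a - b\<bar> powr e" if "0 \<le> a" "0 \<le> b" for a b
  proof (cases "b \<le> a")
    case True then show ?thesis using core_small[of b a e] that e powr_mono2[of e b a]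
      by (simp add: spow_nonneg)
  next
    case False then show ?thesis using core_small[of a b e] that e powr_mono2[of e a b]
      by (simp add: spow_nonneg abs_minus_commute)
  qed
  have opp: "\<bar>spow a e - spow b e\<bar> \<le> 2 * \<bar>a - b\<bar> powr e" if "0 \<le> a" "b \<le> 0" for a b
  proof -
    have "\<bar>spow a e - spow b e\<bar> \<le> \<bar>spow a e\<bar> + \<bar>spow b e\<bar>" by linarith
    also have "\<dots> = \<bar>a\<bar> powr e + \<bar>b\<bar> powr e" by (simp add: spow_abs)
    also have "\<dots> \<le> \<bar>a - b\<bar> powr e + \<bar>a - b\<bar> powr e"
      using that e by (intro add_mono powr_mono2) auto
    finally show ?thesis by simp
  qed
  show ?thesis
  proof (cases "0 \<le> a")
    case a: True
    show ?thesis
    proof (cases "0 \<le> b")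
      case True then show ?thesis using same[OF a True] by (smt (verit) powr_ge_zero)
    next
      case False then show ?thesis using opp[OF a] by simp
    qed
  next
    case a: False
    show ?thesis
    proof (cases "0 \<le> b")
      case True then show ?thesis using opp[OF True, of a] a by (simp add: abs_minus_commute)
    next
      case False
      then show ?thesis using same[of "-a" "-b"] a by (simp add: spow_neg abs_minus_commute)
    qed
  qed
qed

lemma spow_diff_large:
  fixes a b e :: real
  assumes e: "1 \<le> e"
  shows "\<bar>spow a e - spow b e\<bar> \<le> e * (\<bar>a\<bar> + \<bar>b\<bar>) powr (e - 1) * \<bar>a - b\<bar>"
proof -
  have same: "\<bar>spow a e - spow b e\<bar> \<le> e * (\<bar>a\<bar> + \<bar>b\<bar>) powr (e - 1) * \<bar>a - b\<bar>" if "0 \<le> a" "0 \<le> b" for a b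
  proof (cases "b \<le> a")
    case True
    have "a powr e - b powr e \<le> e * a powr (e - 1) * (a - b)" using core_large[of b a e] that e True by simp
    also have "\<dots> \<le> e * (a + b) powr (e - 1) * (a - b)"
      using that e True by (intro mult_right_mono mult_left_mono powr_mono2) auto
    finally show ?thesis using True that e powr_mono2[of e b a] by (simp add: spow_nonneg)
  next
    case False
    have "b powr e - a powr e \<le> e * b powr (e - 1) * (b - a)" using core_large[of a b e] that e False by simp
    also have "\<dots> \<le> e * (a + b) powr (e - 1) * (b - a)"
      using that e False by (intro mult_right_mono mult_left_mono powr_mono2) auto
    finally show ?thesis using False that e powr_mono2[of e a b] by (simp add: spow_nonneg abs_minus_commute add.commute)
  qed
  have opp: "\<bar>spow a e - spow b e\<bar> \<le> e * (\<bar>a\<bar> + \<bar>b\<bar>) powr (e - 1) * \<bar>a - b\<bar>" if "0 \<le> a" "b \<le> 0" for a b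
  proof -
    have ab: "\<bar>a - b\<bar> = \<bar>a\<bar> + \<bar>b\<bar>" using that by auto
    have "\<bar>spow a e - spow b e\<bar> \<le> \<bar>spow a e\<bar> + \<bar>spow b e\<bar>" by linarith
    also have "\<dots> = \<bar>a\<bar> powr (e - 1) * \<bar>a\<bar> + \<bar>b\<bar> powr (e - 1) * \<bar>b\<bar>" by (simp add: spow_def abs_mult)
    also have "\<dots> \<le> (\<bar>a\<bar> + \<bar>b\<bar>) powr (e - 1) * \<bar>a\<bar> + (\<bar>a\<bar> + \<bar>b\<bar>) powr (e - 1) * \<bar>b\<bar>"
      using e by (intro add_mono mult_right_mono powr_mono2) auto
    also have "\<dots> = 1 * (\<bar>a\<bar> + \<bar>b\<bar>) powr (e - 1) * \<bar>a - b\<bar>" by (simp add: ab algebra_simps)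
    also have "\<dots> \<le> e * (\<bar>a\<bar> + \<bar>b\<bar>) powr (e - 1) * \<bar>a - b\<bar>"
      using e by (intro mult_right_mono) auto
    finally show ?thesis .
  qed
  show ?thesis
  proof (cases "0 \<le> a")
    case a: True
    show ?thesis
    proof (cases "0 \<le> b")
      case True then show ?thesis using same[OF a True] by simp
    next
      case False then show ?thesis using opp[OF a] by simp
    qed
  next
    case a: False
    show ?thesis
    proof (cases "0 \<le> b")
      case True then show ?thesis using opp[OF True, of a] a by (simp add: abs_minus_commute add.commute)
    next
      case False
      then show ?thesis using same[of "-a" "-b"] a by (simp add: spow_neg abs_minus_commute)
    qed
  qed
qed

lemma spow_meas[measurable]: "f \<in> borel_measurable M \<Longrightarrow> (\<lambda>x. spow (f x) e) \<in> borel_measurable M"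
  unfolding spow_def by measurable

lemma id_leb_borel[measurable]: "(\<lambda>x::'a::euclidean_space. x) \<in> borel_measurable lebesgue"
  by (simp add: measurable_completion)

lemma kernel_meas:
  fixes u :: "'a::euclidean_space \<Rightarrow> real"
  assumes [measurable]: "u \<in> borel_measurable lebesgue"
  shows "(\<lambda>z. indicator (- ball (fst z) \<epsilon>) (snd z) * (spow (u (fst z) - u (snd z)) e / norm (fst z - snd z) powr \<alpha>))
     \<in> borel_measurable (lebesgue \<Otimes>\<^sub>M lebesgue)"
proof -
  have [measurable]: "(\<lambda>z::'a\<times>'a. fst z) \<in> borel_measurable (lebesgue \<Otimes>\<^sub>M lebesgue)"
    by (rule measurable_compose[OF measurable_fst id_leb_borel])
  have [measurable]: "(\<lambda>z::'a\<times>'a. snd z) \<in> borel_measurable (lebesgue \<Otimes>\<^sub>M lebesgue)"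
    by (rule measurable_compose[OF measurable_snd id_leb_borel])
  have [measurable]: "(\<lambda>z::'a\<times>'a. u (fst z)) \<in> borel_measurable (lebesgue \<Otimes>\<^sub>M lebesgue)"
    by (rule measurable_compose[OF measurable_fst]) simp
  have [measurable]: "(\<lambda>z::'a\<times>'a. u (snd z)) \<in> borel_measurable (lebesgue \<Otimes>\<^sub>M lebesgue)"
    by (rule measurable_compose[OF measurable_snd]) simp
  have [measurable]: "(\<lambda>z::'a\<times>'a. fst z - snd z) \<in> borel_measurable (lebesgue \<Otimes>\<^sub>M lebesgue)"
    by (rule borel_measurable_diff) measurable
  have m2: "(\<lambda>z. spow (u (fst z) - u (snd z)) e / norm (fst z - snd z) powr \<alpha>) \<in> borel_measurable (lebesgue \<Otimes>\<^sub>M lebesgue)"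
    by measurable
  have m1: "(\<lambda>z::'a\<times>'a. if norm (fst z - snd z) < \<epsilon> then 0 else (1::real)) \<in> borel_measurable (lebesgue \<Otimes>\<^sub>M lebesgue)"
    by measurable
  have eq: "(\<lambda>z. indicator (- ball (fst z) \<epsilon>) (snd z) * (spow (u (fst z) - u (snd z)) e / norm (fst z - snd z) powr \<alpha>))
     = (\<lambda>z. (if norm (fst z - snd z) < \<epsilon> then 0 else (1::real)) * (spow (u (fst z) - u (snd z)) e / norm (fst z - snd z) powr \<alpha>))"
    by (auto simp: fun_eq_iff indicator_def dist_norm)
  show ?thesis unfolding eq using borel_measurable_times[OF m1 m2] .
qed

lemma frac_trunc_meas:
  fixes u :: "'a::euclidean_space \<Rightarrow> real"
  assumes "u \<in> borel_measurable lebesgue"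
  shows "frac_trunc s p u \<epsilon> \<in> borel_measurable lebesgue"
proof -
  interpret sigma_finite_measure "lebesgue::'a measure" by (rule sigma_finite_lebesgue)
  have "(\<lambda>x. \<integral>y. indicator (- ball x \<epsilon>) y * (spow (u x - u y) (p - 1) / norm (x - y) powr (real DIM('a) + p * s)) \<partial>lebesgue)
        \<in> borel_measurable lebesgue"
    by (rule borel_measurable_lebesgue_integral) (use kernel_meas[OF assms] in simp)
  then show ?thesis unfolding frac_trunc_def[abs_def] by measurable
qed

lemma kernel_meas_y:
  fixes u :: "'a::euclidean_space \<Rightarrow> real"
  assumes [measurable]: "u \<in> borel_measurable lebesgue"
  shows "(\<lambda>y. indicator (- ball x \<epsilon>) y * (spow (u x - u y) e / norm (x - y) powr \<alpha>)) \<in> borel_measurable lebesgue"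
  using measurable_Pair2[OF kernel_meas[OF assms, of \<epsilon> e \<alpha>], of x] by simp

lemma lebesgue_reflect:
  fixes c :: "'a::euclidean_space"
  shows "distr lebesgue lebesgue (\<lambda>y. c - y) = lebesgue"
    and "(\<lambda>y. c - y) \<in> lebesgue \<rightarrow>\<^sub>M lebesgue"
proof -
  have T: "(\<lambda>x. c + (\<Sum>j\<in>Basis. (- 1 * (x \<bullet> j)) *\<^sub>R j)) = (\<lambda>y::'a. c - y)"
    by (auto simp: fun_eq_iff sum_negf euclidean_representation)
  show "distr lebesgue lebesgue (\<lambda>y. c - y) = lebesgue"
    using lebesgue_affine_euclidean[of "\<lambda>_. -1" c] unfolding T by (simp add: density_1)
  show "(\<lambda>y. c - y) \<in> lebesgue \<rightarrow>\<^sub>M lebesgue"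
    using lebesgue_affine_measurable[of "\<lambda>_. -1" c] unfolding T by simp
qed

lemma integral_reflect:
  fixes c :: "'a::euclidean_space" and f :: "'a \<Rightarrow> real"
  assumes "f \<in> borel_measurable lebesgue"
  shows "(\<integral>y. f (c - y) \<partial>lebesgue) = (\<integral>y. f y \<partial>lebesgue)"
  using integral_distr[OF lebesgue_reflect(2)[of c] assms] lebesgue_reflect(1)[of c] by simp

lemma integrable_reflect:
  fixes c :: "'a::euclidean_space" and f :: "'a \<Rightarrow> real"
  assumes "integrable lebesgue f"
  shows "integrable lebesgue (\<lambda>y. f (c - y))"
  using integrable_distr_eq[OF lebesgue_reflect(2)[of c], of f] lebesgue_reflect(1)[of c] assms
  by (simp add: borel_measurable_integrable)

lemma W_integrable:
  fixes \<alpha> :: real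
  assumes \<alpha>: "\<alpha> > DIM('a)"
  shows "integrable lebesgue (\<lambda>y::'a::euclidean_space. 1 / (1 + norm y) powr \<alpha>)"
proof (rule integrableI_bounded)
  show "(\<lambda>y::'a. 1 / (1 + norm y) powr \<alpha>) \<in> borel_measurable lebesgue" by measurable
  have a0: "\<alpha> > 0" using \<alpha> by (smt (verit) of_nat_0_le_iff)
  have pw: "ennreal (norm (1 / (1 + norm y) powr \<alpha>)) \<le>
      ennreal (indicator (ball (0::'a) 1) y) + ennreal (indicator (- ball 0 1) y * dist 0 y powr (- \<alpha>))" for y :: 'a
  proof (cases "norm y < 1")
    case True
    have "1 \<le> (1 + norm y) powr \<alpha>" using a0 by (intro ge_one_powr_ge_zero) auto
    then have "1 / (1 + norm y) powr \<alpha> \<le> 1" by (simp add: divide_le_eq_1)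
    then show ?thesis using True by (auto intro!: ennreal_leI simp: indicator_def)
  next
    case False
    then have "1 / (1 + norm y) powr \<alpha> \<le> 1 / norm y powr \<alpha>"
      using a0 by (intro divide_left_mono powr_mono2) (auto intro!: mult_pos_pos)
    also have "\<dots> = norm y powr (- \<alpha>)" by (simp add: powr_minus_divide)
    finally show ?thesis using False by (auto intro!: ennreal_leI simp: indicator_def)
  qed
  have "(\<integral>\<^sup>+y. ennreal (norm (1 / (1 + norm (y::'a)) powr \<alpha>)) \<partial>lebesgue) \<le>
      (\<integral>\<^sup>+y. ennreal (indicator (ball (0::'a) 1) y) + ennreal (indicator (- ball 0 1) y * dist 0 y powr (- \<alpha>)) \<partial>lebesgue)"
    apply (rule nn_integral_mono) using pw by blast
  also have "\<dots> = (\<integral>\<^sup>+y. ennreal (indicator (ball (0::'a) 1) y) \<partial>lebesgue) + (\<integral>\<^sup>+y. ennreal (indicator (- ball (0::'a) 1) y * dist 0 y powr (- \<alpha>)) \<partial>lebesgue)"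
  proof (rule nn_integral_add)
    have "(\<lambda>y. indicator (- ball (0::'a) 1) y * dist 0 y powr (- \<alpha>)) \<in> borel_measurable borel" by measurable
    then show "(\<lambda>y. ennreal (indicator (- ball (0::'a) 1) y * dist 0 y powr (- \<alpha>))) \<in> borel_measurable lebesgue"
      by (simp add: measurable_completion)
  qed (auto intro!: borel_measurable_indicator)
  also have "\<dots> < \<infinity>"
    using outer_radial[OF \<alpha>, of 1 0] by (simp add: emeasure_ball ennreal_indicator nn_integral_indicator)
  finally show "(\<integral>\<^sup>+y. ennreal (norm (1 / (1 + norm (y::'a)) powr \<alpha>)) \<partial>lebesgue) < \<infinity>" .
qed

lemma tail_bound:
  fixes u :: "'a::euclidean_space \<Rightarrow> real"
  assumes um[measurable]: "u \<in> borel_measurable lebesgue"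
    and I2: "integrable lebesgue (\<lambda>y. \<bar>u y\<bar> powr e / (1 + norm y) powr \<alpha>)"
    and \<alpha>: "\<alpha> > DIM('a)" and e: "e > 0" and \<epsilon>: "\<epsilon> > 0" and x: "norm x \<le> R0"
  shows "integrable lebesgue (\<lambda>y. indicator (- ball x \<epsilon>) y * (spow (u x - u y) e / norm (x - y) powr \<alpha>))"
    and "\<bar>\<integral>y. indicator (- ball x \<epsilon>) y * (spow (u x - u y) e / norm (x - y) powr \<alpha>) \<partial>lebesgue\<bar>
      \<le> 2 powr e * ((1 + R0) / \<epsilon> + 1) powr \<alpha> * (\<bar>u x\<bar> powr e * (\<integral>y. 1 / (1 + norm (y::'a)) powr \<alpha> \<partial>lebesgue)
          + (\<integral>y. \<bar>u y\<bar> powr e / (1 + norm y) powr \<alpha> \<partial>lebesgue))"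
proof -
  define c where "c = (1 + R0) / \<epsilon> + 1"
  define H where "H y = indicator (- ball x \<epsilon>) y * (spow (u x - u y) e / norm (x - y) powr \<alpha>)" for y
  define B where "B (y::'a) = 2 powr e * c powr \<alpha> * (\<bar>u x\<bar> powr e * (1 / (1 + norm y) powr \<alpha>) + \<bar>u y\<bar> powr e / (1 + norm y) powr \<alpha>)" for y
  have a0: "\<alpha> > 0" using \<alpha> by (smt (verit) of_nat_0_le_iff)
  have R0: "R0 \<ge> 0" using x norm_ge_zero order_trans by blast
  have c1: "c \<ge> 1" using R0 \<epsilon> by (simp add: c_def)
  have h1: "integrable lebesgue (\<lambda>y::'a. \<bar>u x\<bar> powr e * (1 / (1 + norm y) powr \<alpha>))"
    by (rule integrable_mult_right) (rule W_integrable[OF \<alpha>])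
  have Bint: "integrable lebesgue B"
    unfolding B_def by (rule integrable_mult_right) (rule Bochner_Integration.integrable_add[OF h1 I2])
  have Hm: "H \<in> borel_measurable lebesgue" unfolding H_def by (rule kernel_meas_y[OF um])
  have B0: "B y \<ge> 0" for y unfolding B_def by (intro mult_nonneg_nonneg add_nonneg_nonneg) auto
  have pwB: "\<bar>H y\<bar> \<le> B y" for y
  proof (cases "dist x y \<ge> \<epsilon>")
    case False then show ?thesis using B0[of y] by (simp add: H_def indicator_def)
  next
    case True
    define d where "d = norm (x - y)"
    have d: "d \<ge> \<epsilon>" using True by (simp add: d_def dist_norm)
    have dpos: "d > 0" using d \<epsilon> by simp
    have s1: "\<bar>spow (u x - u y) e\<bar> \<le> 2 powr e * (\<bar>u x\<bar> powr e + \<bar>u y\<bar> powr e)"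
    proof -
      have "\<bar>spow (u x - u y) e\<bar> = \<bar>u x - u y\<bar> powr e" by (rule spow_abs)
      also have "\<dots> \<le> (2 * max \<bar>u x\<bar> \<bar>u y\<bar>) powr e" using e by (intro powr_mono2) auto
      also have "\<dots> = 2 powr e * max \<bar>u x\<bar> \<bar>u y\<bar> powr e" by (simp add: powr_mult)
      also have "max \<bar>u x\<bar> \<bar>u y\<bar> powr e \<le> \<bar>u x\<bar> powr e + \<bar>u y\<bar> powr e"
        by (cases "\<bar>u x\<bar> \<le> \<bar>u y\<bar>") (auto simp: max_def)
      finally show ?thesis by simp
    qed
    have s2: "1 / d powr \<alpha> \<le> c powr \<alpha> / (1 + norm y) powr \<alpha>"
    proof -
      have "norm y \<le> norm x + norm (x - y)" using norm_triangle_ineq4[of x "x - y"] by simp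
      then have "1 + norm y \<le> 1 + norm x + d" by (simp add: d_def)
      also have "1 + norm x \<le> (1 + R0) / \<epsilon> * d"
      proof -
        have "1 + norm x \<le> 1 + R0" using x by simp
        also have "\<dots> = (1 + R0) * 1" by simp
        also have "\<dots> \<le> (1 + R0) * (d / \<epsilon>)"
          using d \<epsilon> R0 by (intro mult_left_mono) auto
        also have "\<dots> = (1 + R0) / \<epsilon> * d" by simp
        finally show ?thesis .
      qed
      then have "1 + norm x + d \<le> c * d" by (simp add: c_def algebra_simps)
      finally have "1 + norm y \<le> c * d" by simp
      then have "(1 + norm y) powr \<alpha> \<le> (c * d) powr \<alpha>" using a0 by (intro powr_mono2) auto
      also have "\<dots> = c powr \<alpha> * d powr \<alpha>" using c1 dpos by (simp add: powr_mult)
      finally have le: "(1 + norm y) powr \<alpha> \<le> c powr \<alpha> * d powr \<alpha>" .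
      have p0: "1 + norm y > 0" by (smt (verit) norm_ge_zero)
      have p1: "(1 + norm y) powr \<alpha> > 0" using p0 by simp
      have p2: "d powr \<alpha> > 0" using dpos by simp
      show ?thesis using le p1 p2 by (simp add: divide_simps mult.commute)
    qed
    have "norm (H y) = \<bar>spow (u x - u y) e\<bar> * (1 / d powr \<alpha>)"
      using True by (simp add: H_def d_def indicator_def abs_mult)
    also have "\<dots> \<le> (2 powr e * (\<bar>u x\<bar> powr e + \<bar>u y\<bar> powr e)) * (c powr \<alpha> / (1 + norm y) powr \<alpha>)"
      using s1 s2 dpos by (intro mult_mono) auto
    also have "\<dots> = B y" unfolding B_def by (simp add: ring_distribs mult_ac)
    finally show ?thesis by simp
  qed
  have pw: "norm (H y) \<le> norm (B y)" for y using pwB[of y] by simp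
  have intH: "integrable lebesgue H"
    using Bochner_Integration.integrable_bound[OF Bint Hm] pw by auto
  then show int: "integrable lebesgue (\<lambda>y. indicator (- ball x \<epsilon>) y * (spow (u x - u y) e / norm (x - y) powr \<alpha>))"
    unfolding H_def .
  have "\<bar>\<integral>y. H y \<partial>lebesgue\<bar> \<le> (\<integral>y. \<bar>H y\<bar> \<partial>lebesgue)" by (rule integral_abs_bound)
  also have "\<dots> \<le> (\<integral>y. B y \<partial>lebesgue)"
    by (rule integral_mono[OF integrable_abs[OF intH] Bint pwB])
  also have "\<dots> = 2 powr e * c powr \<alpha> * (\<bar>u x\<bar> powr e * (\<integral>y. 1 / (1 + norm (y::'a)) powr \<alpha> \<partial>lebesgue)
          + (\<integral>y. \<bar>u y\<bar> powr e / (1 + norm y) powr \<alpha> \<partial>lebesgue))"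
  proof -
    have q1: "(\<integral>y. B y \<partial>lebesgue) = 2 powr e * c powr \<alpha> * (\<integral>y. \<bar>u x\<bar> powr e * (1 / (1 + norm y) powr \<alpha>) + \<bar>u y\<bar> powr e / (1 + norm y) powr \<alpha> \<partial>lebesgue)"
      unfolding B_def by (rule integral_mult_right_zero)
    have q2: "(\<integral>y. \<bar>u x\<bar> powr e * (1 / (1 + norm y) powr \<alpha>) + \<bar>u y\<bar> powr e / (1 + norm y) powr \<alpha> \<partial>lebesgue)
       = (\<integral>y. \<bar>u x\<bar> powr e * (1 / (1 + norm (y::'a)) powr \<alpha>) \<partial>lebesgue) + (\<integral>y. \<bar>u y\<bar> powr e / (1 + norm y) powr \<alpha> \<partial>lebesgue)"
      by (rule Bochner_Integration.integral_add[OF h1 I2])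
    have q3: "(\<integral>y. \<bar>u x\<bar> powr e * (1 / (1 + norm (y::'a)) powr \<alpha>) \<partial>lebesgue) = \<bar>u x\<bar> powr e * (\<integral>y. 1 / (1 + norm (y::'a)) powr \<alpha> \<partial>lebesgue)"
      by (rule integral_mult_right_zero)
    show ?thesis by (simp only: q1 q2 q3)
  qed
  finally show "\<bar>\<integral>y. indicator (- ball x \<epsilon>) y * (spow (u x - u y) e / norm (x - y) powr \<alpha>) \<partial>lebesgue\<bar>
      \<le> 2 powr e * ((1 + R0) / \<epsilon> + 1) powr \<alpha> * (\<bar>u x\<bar> powr e * (\<integral>y. 1 / (1 + norm (y::'a)) powr \<alpha> \<partial>lebesgue)
          + (\<integral>y. \<bar>u y\<bar> powr e / (1 + norm y) powr \<alpha> \<partial>lebesgue))"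
    by (simp add: H_def c_def)
qed

lemma taylor_holder:
  fixes u :: "'a::euclidean_space \<Rightarrow> real" and Du :: "'a \<Rightarrow> 'a"
  assumes deriv: "\<forall>z\<in>S. (u has_derivative (\<lambda>h. Du z \<bullet> h)) (at z)"
    and hold: "\<forall>z\<in>S. \<forall>w\<in>S. norm (Du z - Du w) \<le> C * norm (z - w) powr \<gamma>"
    and C: "C \<ge> 0" and \<gamma>: "\<gamma> \<ge> 0"
    and sub: "cball x (norm h) \<subseteq> S"
  shows "\<bar>u (x + h) - u x - Du x \<bullet> h\<bar> \<le> C * norm h powr (1 + \<gamma>)"
proof -
  let ?T = "cball x (norm h)"
  have xT: "x \<in> ?T" by simp
  have seg: "x + t *\<^sub>R (x + h - x) \<in> ?T" if "t \<in> {0..1}" for t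
    using that by (auto simp: dist_norm mult_left_le_one_le)
  have der: "(u has_derivative (\<lambda>k. Du z \<bullet> k)) (at z within ?T)" if "z \<in> ?T" for z
  proof -
    have "z \<in> S" using sub that by auto
    then show ?thesis using deriv by (auto intro: has_derivative_at_withinI)
  qed
  have on: "onorm ((\<lambda>k. Du z \<bullet> k) - (\<lambda>k. Du x \<bullet> k)) \<le> C * norm h powr \<gamma>" if "z \<in> ?T" for z
  proof (rule onorm_le)
    fix k
    have "norm (((\<lambda>k. Du z \<bullet> k) - (\<lambda>k. Du x \<bullet> k)) k) = \<bar>(Du z - Du x) \<bullet> k\<bar>"
      by (simp add: inner_diff_left)
    also have "\<dots> \<le> norm (Du z - Du x) * norm k" by (rule Cauchy_Schwarz_ineq2)
    also have "norm (Du z - Du x) \<le> C * norm (z - x) powr \<gamma>" using hold sub that xT by blast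
    also have "C * norm (z - x) powr \<gamma> \<le> C * norm h powr \<gamma>"
      using that C \<gamma> by (intro mult_left_mono powr_mono2) (auto simp: dist_norm norm_minus_commute)
    finally show "norm (((\<lambda>k. Du z \<bullet> k) - (\<lambda>k. Du x \<bullet> k)) k) \<le> C * norm h powr \<gamma> * norm k"
      by (simp add: mult_right_mono)
  qed
  have "norm (u (x + h) - u x - Du x \<bullet> (x + h - x)) \<le> norm (x + h - x) * (C * norm h powr \<gamma>)"
    by (rule differentiable_bound_linearization[where S="?T" and f'="\<lambda>z k. Du z \<bullet> k", OF seg der on xT])
  then have "\<bar>u (x + h) - u x - Du x \<bullet> h\<bar> \<le> norm h * (C * norm h powr \<gamma>)" by simp
  also have "\<dots> = C * norm h powr (1 + \<gamma>)"
    by (cases "h = 0") (auto simp: powr_add)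
  finally show ?thesis .
qed

lemma kernel_est:
  fixes u :: "'a::euclidean_space \<Rightarrow> real" and Du :: "'a \<Rightarrow> 'a"
  assumes deriv: "\<forall>z\<in>S. (u has_derivative (\<lambda>h. Du z \<bullet> h)) (at z)"
    and hold: "\<forall>z\<in>S. \<forall>w\<in>S. norm (Du z - Du w) \<le> C * norm (z - w) powr \<gamma>"
    and C: "C \<ge> 0" and \<gamma>: "\<gamma> \<ge> 0"
    and sub: "cball x \<delta> \<subseteq> S" and M: "norm (Du x) \<le> M"
    and h: "0 < norm h" "norm h \<le> \<delta>" and e: "e > 0"
  shows "\<bar>spow (u x - u (x + h)) e + spow (u x - u (x - h)) e\<bar> \<le>
     (if e \<ge> 1 then e * (2 * (M + C * \<delta> powr \<gamma>)) powr (e - 1) * (2 * C) else 2 * (2 * C) powr e)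
      * norm h powr (if e \<ge> 1 then e + \<gamma> else e * (1 + \<gamma>))"
proof -
  define a where "a = u (x + h) - u x"
  define b where "b = u x - u (x - h)"
  define M' where "M' = M + C * \<delta> powr \<gamma>"
  have sub': "cball x (norm h) \<subseteq> S" using sub h by auto
  have sub'': "cball x (norm (- h)) \<subseteq> S" using sub' by simp
  have r1: "\<bar>a - Du x \<bullet> h\<bar> \<le> C * norm h powr (1 + \<gamma>)"
    using taylor_holder[OF deriv hold C \<gamma> sub'] by (simp add: a_def)
  have r2: "\<bar>b - Du x \<bullet> h\<bar> \<le> C * norm h powr (1 + \<gamma>)"
    using taylor_holder[OF deriv hold C \<gamma> sub''] by (simp add: b_def inner_minus_right)
  have ab: "\<bar>a - b\<bar> \<le> 2 * C * norm h powr (1 + \<gamma>)" using r1 r2 by linarith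
  have hp: "norm h powr (1 + \<gamma>) \<le> norm h * \<delta> powr \<gamma>"
  proof -
    have "norm h powr (1 + \<gamma>) = norm h * norm h powr \<gamma>" using h by (simp add: powr_add)
    also have "\<dots> \<le> norm h * \<delta> powr \<gamma>" using h \<gamma> by (intro mult_left_mono powr_mono2) auto
    finally show ?thesis .
  qed
  have Dh: "\<bar>Du x \<bullet> h\<bar> \<le> M * norm h"
    using Cauchy_Schwarz_ineq2[of "Du x" h] M by (smt (verit) mult_right_mono norm_ge_zero)
  have M0: "M \<ge> 0" using M norm_ge_zero order_trans by blast
  have Ca: "C * norm h powr (1 + \<gamma>) \<le> C * \<delta> powr \<gamma> * norm h" using hp C
    by (metis mult.assoc mult.commute mult_left_mono)
  have aM: "\<bar>a\<bar> \<le> M' * norm h" using r1 Dh Ca by (simp add: M'_def algebra_simps)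
  have bM: "\<bar>b\<bar> \<le> M' * norm h" using r2 Dh Ca by (simp add: M'_def algebra_simps)
  have M'0: "M' \<ge> 0" using M0 C by (simp add: M'_def)
  have lhs: "\<bar>spow (u x - u (x + h)) e + spow (u x - u (x - h)) e\<bar> = \<bar>spow a e - spow b e\<bar>"
  proof -
    have "u x - u (x + h) = - a" by (simp add: a_def)
    then have "spow (u x - u (x + h)) e = - spow a e" by (simp add: spow_neg)
    then show ?thesis by (simp add: b_def)
  qed
  show ?thesis
  proof (cases "e \<ge> 1")
    case True
    have "\<bar>spow a e - spow b e\<bar> \<le> e * (\<bar>a\<bar> + \<bar>b\<bar>) powr (e - 1) * \<bar>a - b\<bar>" by (rule spow_diff_large[OF True])
    also have "\<dots> \<le> e * (2 * M' * norm h) powr (e - 1) * (2 * C * norm h powr (1 + \<gamma>))"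
      using aM bM ab True e by (intro mult_mono powr_mono2) auto
    also have "\<dots> = e * (2 * M') powr (e - 1) * (2 * C) * (norm h powr (e - 1) * norm h powr (1 + \<gamma>))"
      using M'0 by (simp add: powr_mult mult_ac)
    also have "norm h powr (e - 1) * norm h powr (1 + \<gamma>) = norm h powr (e + \<gamma>)"
      using h by (simp add: powr_add[symmetric])
    finally show ?thesis using True lhs by (simp add: M'_def)
  next
    case False
    have "\<bar>spow a e - spow b e\<bar> \<le> 2 * \<bar>a - b\<bar> powr e" using spow_diff_small[of e a b] e False by simp
    also have "\<dots> \<le> 2 * (2 * C * norm h powr (1 + \<gamma>)) powr e"
      using ab e by (intro mult_left_mono powr_mono2) auto
    also have "\<dots> = 2 * (2 * C) powr e * norm h powr (e * (1 + \<gamma>))"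
      using C by (simp add: powr_mult powr_powr mult_ac)
    finally show ?thesis using False lhs by simp
  qed
qed

lemma cauchy_limit:
  fixes F :: "real \<Rightarrow> real"
  assumes \<delta>: "\<delta> > 0" and \<tau>: "\<tau> > 0" and B: "B \<ge> 0"
    and est: "\<And>\<epsilon>' \<epsilon>. 0 < \<epsilon>' \<Longrightarrow> \<epsilon>' \<le> \<epsilon> \<Longrightarrow> \<epsilon> \<le> \<delta> \<Longrightarrow> \<bar>F \<epsilon>' - F \<epsilon>\<bar> \<le> B * \<epsilon> powr \<tau>"
  shows "convergent (\<lambda>n. F (1 / Suc n))"
    and "\<And>\<epsilon>. 0 < \<epsilon> \<Longrightarrow> \<epsilon> \<le> \<delta> \<Longrightarrow> \<bar>F \<epsilon> - lim (\<lambda>n. F (1 / Suc n))\<bar> \<le> B * \<epsilon> powr \<tau>"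
proof -
  define X where "X n = F (1 / Suc n)" for n
  have r0: "(\<lambda>n. 1 / real (Suc n)) \<longlonglongrightarrow> 0"
    using LIMSEQ_inverse_real_of_nat by (simp add: inverse_eq_divide)
  have t0: "(\<lambda>n. B * (1 / real (Suc n)) powr \<tau>) \<longlonglongrightarrow> 0"
    by (rule tendsto_mult_right_zero, rule tendsto_zero_powrI[OF r0 tendsto_const]) (use \<tau> in auto)
  have ev: "eventually (\<lambda>n. 1 / real (Suc n) < \<delta>) sequentially"
    using order_tendstoD(2)[OF r0 \<delta>] .
  have C: "Cauchy X"
  proof (rule CauchyI)
    fix r :: real assume r: "r > 0"
    have "eventually (\<lambda>n. B * (1 / real (Suc n)) powr \<tau> < r \<and> 1 / real (Suc n) < \<delta>) sequentially"
      using order_tendstoD(2)[OF t0 r] ev by eventually_elim auto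
    then obtain M where M: "\<And>n. n \<ge> M \<Longrightarrow> B * (1 / real (Suc n)) powr \<tau> < r \<and> 1 / real (Suc n) < \<delta>"
      by (auto simp: eventually_sequentially)
    have "norm (X m - X n) < r" if mn: "m \<ge> M" "n \<ge> M" for m n
    proof -
      have gen: "\<bar>X a - X b\<bar> < r" if "b \<le> a" "b \<ge> M" for a b
      proof -
        have "1 / real (Suc a) \<le> 1 / real (Suc b)" using that by (simp add: frac_le)
        then have "\<bar>X a - X b\<bar> \<le> B * (1 / real (Suc b)) powr \<tau>"
          unfolding X_def using M[OF that(2)] by (intro est) auto
        also have "\<dots> < r" using M[OF that(2)] by auto
        finally show ?thesis .
      qed
      show ?thesis
      proof (cases "n \<le> m")
        case True then show ?thesis using gen[of n m] mn by simp
      next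
        case False then show ?thesis using gen[of m n] mn by (simp add: abs_minus_commute)
      qed
    qed
    then show "\<exists>M. \<forall>m\<ge>M. \<forall>n\<ge>M. norm (X m - X n) < r" by blast
  qed
  show conv: "convergent (\<lambda>n. F (1 / Suc n))" using C unfolding Cauchy_convergent_iff X_def[abs_def] .
  fix \<epsilon> :: real assume e: "0 < \<epsilon>" "\<epsilon> \<le> \<delta>"
  have lim: "X \<longlonglongrightarrow> lim X" using conv unfolding convergent_LIMSEQ_iff X_def[abs_def] .
  have "(\<lambda>n. \<bar>F \<epsilon> - X n\<bar>) \<longlonglongrightarrow> \<bar>F \<epsilon> - lim X\<bar>"
    by (intro tendsto_intros lim)
  moreover have "\<exists>N. \<forall>n\<ge>N. \<bar>F \<epsilon> - X n\<bar> \<le> B * \<epsilon> powr \<tau>"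
  proof -
    obtain N where N: "\<And>n. n \<ge> N \<Longrightarrow> 1 / real (Suc n) < \<epsilon>"
      using order_tendstoD(2)[OF r0 e(1)] by (auto simp: eventually_sequentially)
    have "\<bar>F \<epsilon> - X n\<bar> \<le> B * \<epsilon> powr \<tau>" if "n \<ge> N" for n
      using est[of "1 / real (Suc n)" \<epsilon>] N[OF that] e unfolding X_def by (simp add: abs_minus_commute)
    then show ?thesis by blast
  qed
  ultimately show "\<bar>F \<epsilon> - lim (\<lambda>n. F (1 / Suc n))\<bar> \<le> B * \<epsilon> powr \<tau>"
    unfolding X_def[abs_def] by (rule LIMSEQ_le_const2)
qed

lemma tau_pos:
  fixes p s \<gamma> :: real
  assumes "0 < s" "s < 1" "1 < p" "0 \<le> \<gamma>"
    and "p \<ge> 2 \<longrightarrow> \<gamma> > 1 - p * (1 - s)"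
    and "p < 2 \<longrightarrow> \<gamma> > (1 - p * (1 - s)) / (p - 1)"
  shows "(if p - 1 \<ge> 1 then (p - 1) + \<gamma> else (p - 1) * (1 + \<gamma>)) - p * s > 0"
proof (cases "p - 1 \<ge> 1")
  case True
  then have "\<gamma> > 1 - p * (1 - s)" using assms by auto
  then show ?thesis using True by (simp add: algebra_simps)
next
  case False
  then have g: "\<gamma> > (1 - p * (1 - s)) / (p - 1)" using assms by auto
  have p1: "p - 1 > 0" using assms by simp
  have "(p - 1) * \<gamma> > 1 - p * (1 - s)" using g p1 by (simp add: field_simps)
  then show ?thesis using False by (simp add: algebra_simps)
qed

theorem proposition2p12:
  fixes s p \<gamma> :: real and \<Omega> :: "'a::euclidean_space set" and u :: "'a \<Rightarrow> real"
  assumes "0 < s" "s < 1" "1 < p"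
    and "bounded \<Omega>" "open \<Omega>"
    and "in_tWsp s p \<Omega> u" "in_C1gamma_loc \<gamma> \<Omega> u"
    and "0 \<le> \<gamma>" "\<gamma> \<le> 1"
    and "p \<ge> 2 \<longrightarrow> \<gamma> > 1 - p * (1 - s)"
    and "p < 2 \<longrightarrow> \<gamma> > (1 - p * (1 - s)) / (p - 1)"
  shows "\<exists>f. in_Linf_loc \<Omega> f \<and> strong_solution s p \<Omega> u f"
proof -
  define N where "N = real DIM('a)"
  define \<alpha> where "\<alpha> = N + p * s"
  define e where "e = p - 1"
  define \<theta> where "\<theta> = (if e \<ge> 1 then e + \<gamma> else e * (1 + \<gamma>))"
  define \<tau> where "\<tau> = \<theta> - p * s"
  have e0: "e > 0" using assms by (simp add: e_def)
  have \<alpha>N: "\<alpha> > DIM('a)" using assms by (simp add: \<alpha>_def N_def)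
  have \<tau>0: "\<tau> > 0" unfolding \<tau>_def \<theta>_def e_def using tau_pos[OF assms(1,2,3,8,10,11)] .
  have \<theta>\<alpha>: "\<theta> - \<alpha> = \<tau> - real DIM('a)" by (simp add: \<tau>_def \<alpha>_def N_def)
  have um[measurable]: "u \<in> borel_measurable lebesgue"
    using assms(6) by (simp add: in_tWsp_def in_Lp_loc_def)
  have tailfin: "(\<integral>\<^sup>+ x. ennreal (\<bar>u x\<bar> powr e / (1 + norm x) powr \<alpha>) \<partial>lebesgue) < \<infinity>"
    using assms(6) by (simp add: in_tWsp_def e_def \<alpha>_def N_def)
  have I2: "integrable lebesgue (\<lambda>y. \<bar>u y\<bar> powr e / (1 + norm y) powr \<alpha>)"
  proof (rule integrableI_bounded)
    show "(\<lambda>y. \<bar>u y\<bar> powr e / (1 + norm y) powr \<alpha>) \<in> borel_measurable lebesgue" by measurable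
    have "(\<lambda>y. ennreal (norm (\<bar>u y\<bar> powr e / (1 + norm y) powr \<alpha>))) = (\<lambda>y. ennreal (\<bar>u y\<bar> powr e / (1 + norm y) powr \<alpha>))"
    proof
      fix y :: 'a
      have "1 + norm y > 0" by (smt (verit) norm_ge_zero)
      then show "ennreal (norm (\<bar>u y\<bar> powr e / (1 + norm y) powr \<alpha>)) = ennreal (\<bar>u y\<bar> powr e / (1 + norm y) powr \<alpha>)"
        by simp
    qed
    then show "(\<integral>\<^sup>+ y. ennreal (norm (\<bar>u y\<bar> powr e / (1 + norm y) powr \<alpha>)) \<partial>lebesgue) < \<infinity>"
      using tailfin by simp
  qed
  obtain Du :: "'a \<Rightarrow> 'a" where der: "\<forall>x\<in>\<Omega>. (u has_derivative (\<lambda>h. Du x \<bullet> h)) (at x)"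
    and contDu: "continuous_on \<Omega> Du"
    and hold: "\<And>K. compact K \<Longrightarrow> K \<subseteq> \<Omega> \<Longrightarrow> \<exists>C. \<forall>x\<in>K. \<forall>y\<in>K. norm (Du x - Du y) \<le> C * norm (x - y) powr \<gamma>"
  proof -
    have "\<exists>Du :: 'a \<Rightarrow> 'a. (\<forall>x\<in>\<Omega>. (u has_derivative (\<lambda>h. Du x \<bullet> h)) (at x)) \<and> continuous_on \<Omega> Du \<and>
        (\<forall>K. compact K \<and> K \<subseteq> \<Omega> \<longrightarrow> (\<exists>C. \<forall>x\<in>K. \<forall>y\<in>K. norm (Du x - Du y) \<le> C * norm (x - y) powr \<gamma>))"
      using assms(7) unfolding in_C1gamma_loc_def .
    then obtain Du :: "'a \<Rightarrow> 'a" where a1: "\<forall>x\<in>\<Omega>. (u has_derivative (\<lambda>h. Du x \<bullet> h)) (at x)"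
      and a2: "continuous_on \<Omega> Du"
      and a3: "\<forall>K. compact K \<and> K \<subseteq> \<Omega> \<longrightarrow> (\<exists>C. \<forall>x\<in>K. \<forall>y\<in>K. norm (Du x - Du y) \<le> C * norm (x - y) powr \<gamma>)"
      by blast
    show thesis by (rule that[OF a1 a2]) (use a3 in blast)
  qed
  have ucont: "continuous_on \<Omega> u"
  proof (rule continuous_at_imp_continuous_on, intro ballI)
    fix x assume "x \<in> \<Omega>"
    then have "(u has_derivative (\<lambda>h. Du x \<bullet> h)) (at x)" using der by blast
    then show "isCont u x" by (rule has_derivative_continuous)
  qed
  define F where "F \<epsilon> x = frac_trunc s p u \<epsilon> x" for \<epsilon> x
  have Fdef: "F \<epsilon> x = 2 * (\<integral>y. indicator (- ball x \<epsilon>) y * (spow (u x - u y) e / norm (x - y) powr \<alpha>) \<partial>lebesgue)" for \<epsilon> x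
    by (simp add: F_def frac_trunc_def e_def \<alpha>_def N_def)
  have Fm[measurable]: "F \<epsilon> \<in> borel_measurable lebesgue" for \<epsilon>
    unfolding F_def[abs_def] using frac_trunc_meas[OF um] by simp
  obtain Cin where Cin0: "Cin \<ge> 0" and Cin: "\<And>(x::'a) \<epsilon>. \<epsilon> > 0 \<Longrightarrow>
      (\<integral>\<^sup>+y. ennreal (indicator (ball x \<epsilon>) y * dist x y powr (\<tau> - DIM('a))) \<partial>lebesgue) \<le> ennreal (Cin * \<epsilon> powr \<tau>)"
    using inner_radial[OF \<tau>0] by blast
  have key: "\<exists>\<delta>>0. \<exists>B\<ge>0. \<exists>T. (\<forall>x\<in>K. \<forall>\<epsilon>' \<epsilon>. 0 < \<epsilon>' \<longrightarrow> \<epsilon>' \<le> \<epsilon> \<longrightarrow> \<epsilon> \<le> \<delta> \<longrightarrow> \<bar>F \<epsilon>' x - F \<epsilon> x\<bar> \<le> B * \<epsilon> powr \<tau>)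
        \<and> (\<forall>x\<in>K. \<bar>F \<delta> x\<bar> \<le> T)" if K: "compact K" "K \<subseteq> \<Omega>" for K
  proof -
    obtain \<delta> where \<delta>: "\<delta> > 0" "(\<Union>x\<in>K. cball x \<delta>) \<subseteq> \<Omega>"
      using compact_subset_open_imp_cball_epsilon_subset[OF K(1) assms(5) K(2)] by blast
    define K' where "K' = {x + z | x z. x \<in> K \<and> z \<in> cball 0 \<delta>}"
    have K'c: "compact K'" unfolding K'_def by (intro compact_sums K(1) compact_cball)
    have cbK': "cball x \<delta> \<subseteq> K'" if "x \<in> K" for x
    proof
      fix y assume "y \<in> cball x \<delta>"
      then have "y - x \<in> cball 0 \<delta>" by (simp add: dist_norm norm_minus_commute)
      then have "y = x + (y - x) \<and> x \<in> K \<and> y - x \<in> cball 0 \<delta>" using that by simp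
      then show "y \<in> K'" unfolding K'_def by blast
    qed
    have K'\<Omega>: "K' \<subseteq> \<Omega>"
    proof
      fix y assume "y \<in> K'"
      then obtain x z where xz: "y = x + z" "x \<in> K" "z \<in> cball 0 \<delta>" by (auto simp: K'_def)
      then have "y \<in> cball x \<delta>" by (simp add: dist_norm)
      then show "y \<in> \<Omega>" using \<delta>(2) xz(2) by blast
    qed
    obtain C0 where C0: "\<forall>z\<in>K'. \<forall>w\<in>K'. norm (Du z - Du w) \<le> C0 * norm (z - w) powr \<gamma>"
      using hold[OF K'c K'\<Omega>] by blast
    define C where "C = max C0 0"
    have C: "C \<ge> 0" by (simp add: C_def)
    have holdC: "\<forall>z\<in>K'. \<forall>w\<in>K'. norm (Du z - Du w) \<le> C * norm (z - w) powr \<gamma>"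
    proof (intro ballI)
      fix z w assume "z \<in> K'" "w \<in> K'"
      then have "norm (Du z - Du w) \<le> C0 * norm (z - w) powr \<gamma>" using C0 by blast
      also have "\<dots> \<le> C * norm (z - w) powr \<gamma>" by (intro mult_right_mono) (auto simp: C_def)
      finally show "norm (Du z - Du w) \<le> C * norm (z - w) powr \<gamma>" .
    qed
    have derK': "\<forall>z\<in>K'. (u has_derivative (\<lambda>h. Du z \<bullet> h)) (at z)" using der K'\<Omega> by blast
    obtain M where M0: "M \<ge> 0" and M: "\<And>x. x \<in> K' \<Longrightarrow> norm (Du x) \<le> M"
      using continuous_on_compact_bound[OF K'c continuous_on_subset[OF contDu K'\<Omega>]] by blast
    define E where "E = (if e \<ge> 1 then e * (2 * (M + C * \<delta> powr \<gamma>)) powr (e - 1) * (2 * C) else 2 * (2 * C) powr e)"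
    have E0: "E \<ge> 0" using C e0 by (simp add: E_def)
    have kern: "\<bar>spow (u x - u (x + h)) e + spow (u x - u (x - h)) e\<bar> \<le> E * norm h powr \<theta>"
      if x: "x \<in> K" and h: "0 < norm h" "norm h \<le> \<delta>" for x h
    proof -
      have "x \<in> K'" using cbK'[OF x] \<delta>(1) by auto
      then show ?thesis
        using kernel_est[OF derK' holdC C assms(8) cbK'[OF x] M[of x] h e0] by (simp add: E_def \<theta>_def)
    qed
    obtain R0 where R0: "\<And>x. x \<in> K \<Longrightarrow> norm x \<le> R0"
      using compact_imp_bounded[OF K(1)] by (auto simp: bounded_iff)
    obtain U where U0: "U \<ge> 0" and U: "\<And>x. x \<in> K \<Longrightarrow> norm (u x) \<le> U"
      using continuous_on_compact_bound[OF K(1) continuous_on_subset[OF ucont K(2)]] by blast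
    define I1 where "I1 = (\<integral>y. 1 / (1 + norm (y::'a)) powr \<alpha> \<partial>lebesgue)"
    define I2v where "I2v = (\<integral>y. \<bar>u y\<bar> powr e / (1 + norm y) powr \<alpha> \<partial>lebesgue)"
    have I10: "I1 \<ge> 0" unfolding I1_def by (rule Bochner_Integration.integral_nonneg) simp
    define T where "T = 2 * (2 powr e * ((1 + R0) / \<delta> + 1) powr \<alpha> * (U powr e * I1 + I2v))"
    have tailb: "\<bar>F \<delta> x\<bar> \<le> T" if x: "x \<in> K" for x
    proof -
      have "\<bar>F \<delta> x\<bar> = 2 * \<bar>\<integral>y. indicator (- ball x \<delta>) y * (spow (u x - u y) e / norm (x - y) powr \<alpha>) \<partial>lebesgue\<bar>"
        by (simp add: Fdef abs_mult)
      also have "\<dots> \<le> 2 * (2 powr e * ((1 + R0) / \<delta> + 1) powr \<alpha> * (\<bar>u x\<bar> powr e * I1 + I2v))"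
        using tail_bound(2)[OF um I2 \<alpha>N e0 \<delta>(1) R0[OF x]] by (simp add: I1_def I2v_def)
      also have "\<dots> \<le> T"
      proof -
        have "\<bar>u x\<bar> powr e \<le> U powr e" using U[OF x] e0 by (intro powr_mono2) auto
        then have "\<bar>u x\<bar> powr e * I1 \<le> U powr e * I1" using I10 by (rule mult_right_mono)
        then show ?thesis unfolding T_def by (intro mult_left_mono add_right_mono) auto
      qed
      finally show ?thesis .
    qed
    have est: "\<bar>F \<epsilon>' x - F \<epsilon> x\<bar> \<le> (E * Cin) * \<epsilon> powr \<tau>"
      if x: "x \<in> K" and ee: "0 < \<epsilon>'" "\<epsilon>' \<le> \<epsilon>" "\<epsilon> \<le> \<delta>" for x \<epsilon>' \<epsilon>
    proof (cases "\<epsilon>' = \<epsilon>")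
      case True then show ?thesis using E0 Cin0 by simp
    next
      case False
      then have lt: "\<epsilon>' < \<epsilon>" using ee by simp
      have e1: "\<epsilon> > 0" using ee by simp
      define g where "g y = spow (u x - u y) e / norm (x - y) powr \<alpha>" for y
      define G where "G y = indicator (- ball x \<epsilon>') y * g y - indicator (- ball x \<epsilon>) y * g y" for y
      have int1: "integrable lebesgue (\<lambda>y. indicator (- ball x \<epsilon>') y * g y)"
        using tail_bound(1)[OF um I2 \<alpha>N e0 ee(1), of x "norm x"] by (simp add: g_def)
      have int2: "integrable lebesgue (\<lambda>y. indicator (- ball x \<epsilon>) y * g y)"
        using tail_bound(1)[OF um I2 \<alpha>N e0 e1, of x "norm x"] by (simp add: g_def)
      have intG: "integrable lebesgue G" unfolding G_def using int1 int2 by (rule Bochner_Integration.integrable_diff)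
      have FG: "F \<epsilon>' x - F \<epsilon> x = 2 * (\<integral>y. G y \<partial>lebesgue)"
        unfolding Fdef G_def Bochner_Integration.integral_diff[OF int1 int2]
        by (simp add: g_def algebra_simps)
      have Gm: "G \<in> borel_measurable lebesgue" using intG by (rule borel_measurable_integrable)
      define c where "c = x + x"
      have refl: "(\<integral>y. G (c - y) \<partial>lebesgue) = (\<integral>y. G y \<partial>lebesgue)" by (rule integral_reflect[OF Gm])
      have intGr: "integrable lebesgue (\<lambda>y. G (c - y))" by (rule integrable_reflect[OF intG])
      have intS: "integrable lebesgue (\<lambda>y. G y + G (c - y))" by (rule Bochner_Integration.integrable_add[OF intG intGr])
      have sum: "2 * (\<integral>y. G y \<partial>lebesgue) = (\<integral>y. G y + G (c - y) \<partial>lebesgue)"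
        using Bochner_Integration.integral_add[OF intG intGr] refl by simp
      have pw: "ennreal \<bar>G y + G (c - y)\<bar> \<le> ennreal E * ennreal (indicator (ball x \<epsilon>) y * dist x y powr (\<tau> - DIM('a)))" for y
      proof -
        have dc: "dist x (c - y) = dist x y" by (simp add: c_def dist_norm algebra_simps norm_minus_commute)
        show ?thesis
        proof (cases "\<epsilon>' \<le> dist x y \<and> dist x y < \<epsilon>")
          case True
          define h where "h = y - x"
          have hy: "y = x + h" "c - y = x - h" by (simp_all add: h_def c_def algebra_simps)
          have nh: "norm h = dist x y" by (simp add: h_def dist_norm norm_minus_commute)
          have hpos: "0 < norm h" using True ee(1) nh by linarith
          have hle: "norm h \<le> \<delta>" using True ee(3) nh by linarith
          have Gy: "G y = g y" using True by (simp add: G_def indicator_def)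
          have Gcy: "G (c - y) = g (c - y)" using True dc by (simp add: G_def indicator_def)
          have gy: "g y = spow (u x - u (x + h)) e / norm h powr \<alpha>" by (simp add: g_def hy(1))
          have gcy: "g (c - y) = spow (u x - u (x - h)) e / norm h powr \<alpha>" by (simp add: g_def hy(2))
          have np: "norm h powr \<alpha> > 0" using hpos by simp
          have "\<bar>G y + G (c - y)\<bar> = \<bar>spow (u x - u (x + h)) e + spow (u x - u (x - h)) e\<bar> / norm h powr \<alpha>"
            using np by (simp add: Gy Gcy gy gcy add_divide_distrib[symmetric])
          also have "\<dots> \<le> E * norm h powr \<theta> / norm h powr \<alpha>"
            using kern[OF x hpos hle] np by (intro divide_right_mono) auto
          also have "\<dots> = E * norm h powr (\<theta> - \<alpha>)" by (simp add: powr_diff)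
          also have "\<dots> = E * (indicator (ball x \<epsilon>) y * dist x y powr (\<tau> - DIM('a)))"
            using True by (simp add: \<theta>\<alpha> nh indicator_def)
          finally show ?thesis using E0 by (simp add: ennreal_mult'[symmetric])
        next
          case False
          have "G y = 0" using False lt by (auto simp: G_def indicator_def)
          moreover have "G (c - y) = 0" using False dc lt by (auto simp: G_def indicator_def)
          ultimately show ?thesis by simp
        qed
      qed
      have rm: "(\<lambda>y. ennreal (indicator (ball x \<epsilon>) y * dist x y powr (\<tau> - DIM('a)))) \<in> borel_measurable lebesgue"
      proof -
        have "(\<lambda>y. ennreal (indicator (ball x \<epsilon>) y * dist x y powr (\<tau> - DIM('a))))
           = (\<lambda>y. ennreal (indicator {y. 0 \<le> dist x y \<and> dist x y < \<epsilon>} y * dist x y powr (\<tau> - DIM('a))))"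
          by (auto simp: fun_eq_iff indicator_def)
        then show ?thesis using shell_meas[of 0 x \<epsilon> "\<tau> - DIM('a)"] by simp
      qed
      have "(\<integral>\<^sup>+y. ennreal \<bar>G y + G (c - y)\<bar> \<partial>lebesgue)
          \<le> (\<integral>\<^sup>+y. ennreal E * ennreal (indicator (ball x \<epsilon>) y * dist x y powr (\<tau> - DIM('a))) \<partial>lebesgue)"
        by (rule nn_integral_mono) (rule pw)
      also have "\<dots> = ennreal E * (\<integral>\<^sup>+y. ennreal (indicator (ball x \<epsilon>) y * dist x y powr (\<tau> - DIM('a))) \<partial>lebesgue)"
        by (rule nn_integral_cmult[OF rm])
      also have "\<dots> \<le> ennreal E * ennreal (Cin * \<epsilon> powr \<tau>)"
        by (rule mult_left_mono[OF Cin[OF e1]]) simp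
      also have "\<dots> = ennreal (E * Cin * \<epsilon> powr \<tau>)"
        using E0 by (simp add: ennreal_mult'[symmetric] mult.assoc)
      finally have nn: "(\<integral>\<^sup>+y. ennreal \<bar>G y + G (c - y)\<bar> \<partial>lebesgue) \<le> ennreal (E * Cin * \<epsilon> powr \<tau>)" .
      have "(\<integral>y. \<bar>G y + G (c - y)\<bar> \<partial>lebesgue) \<le> E * Cin * \<epsilon> powr \<tau>"
        by (rule integral_real_bounded) (use E0 Cin0 nn in auto)
      moreover have "\<bar>F \<epsilon>' x - F \<epsilon> x\<bar> \<le> (\<integral>y. \<bar>G y + G (c - y)\<bar> \<partial>lebesgue)"
        unfolding FG sum by (rule integral_abs_bound)
      ultimately show ?thesis by simp
    qed
    show ?thesis using \<delta>(1) mult_nonneg_nonneg[OF E0 Cin0] est tailb by blast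
  qed
  define L where "L x = lim (\<lambda>n. F (1 / Suc n) x)" for x
  define f where "f x = indicator \<Omega> x * L x" for x
  have \<Omega>s: "\<Omega> \<in> sets lebesgue" using assms(5) by simp
  have Lm: "L \<in> borel_measurable lebesgue"
    unfolding L_def[abs_def] by (rule borel_measurable_lim_metric) (rule Fm)
  have fm: "f \<in> borel_measurable lebesgue"
    unfolding f_def[abs_def] by (intro borel_measurable_times borel_measurable_indicator \<Omega>s Lm)
  have approx: "\<exists>\<delta>>0. \<exists>B\<ge>0. \<exists>T. (\<forall>x\<in>K. \<forall>\<epsilon>. 0 < \<epsilon> \<longrightarrow> \<epsilon> \<le> \<delta> \<longrightarrow> \<bar>F \<epsilon> x - f x\<bar> \<le> B * \<epsilon> powr \<tau>)
      \<and> (\<forall>x\<in>K. \<bar>F \<delta> x\<bar> \<le> T)" if K: "compact K" "K \<subseteq> \<Omega>" for K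
  proof -
    obtain \<delta> B T where \<delta>: "\<delta> > 0" and B: "B \<ge> 0"
      and est: "\<forall>x\<in>K. \<forall>\<epsilon>' \<epsilon>. 0 < \<epsilon>' \<longrightarrow> \<epsilon>' \<le> \<epsilon> \<longrightarrow> \<epsilon> \<le> \<delta> \<longrightarrow> \<bar>F \<epsilon>' x - F \<epsilon> x\<bar> \<le> B * \<epsilon> powr \<tau>"
      and T: "\<forall>x\<in>K. \<bar>F \<delta> x\<bar> \<le> T"
      using key[OF K] by blast
    have "\<bar>F \<epsilon> x - f x\<bar> \<le> B * \<epsilon> powr \<tau>" if x: "x \<in> K" and \<epsilon>: "0 < \<epsilon>" "\<epsilon> \<le> \<delta>" for x \<epsilon>
    proof -
      have fx: "f x = lim (\<lambda>n. F (1 / Suc n) x)" using K(2) x by (auto simp: f_def L_def)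
      have est': "\<And>\<epsilon>' \<epsilon>. 0 < \<epsilon>' \<Longrightarrow> \<epsilon>' \<le> \<epsilon> \<Longrightarrow> \<epsilon> \<le> \<delta> \<Longrightarrow> \<bar>F \<epsilon>' x - F \<epsilon> x\<bar> \<le> B * \<epsilon> powr \<tau>"
        using est x by blast
      show ?thesis using cauchy_limit(2)[of \<delta> \<tau> B "\<lambda>\<epsilon>. F \<epsilon> x", OF \<delta> \<tau>0 B est' \<epsilon>] fx by simp
    qed
    then show ?thesis using \<delta> B T by blast
  qed
  show ?thesis
  proof (intro exI conjI)
    show "in_Linf_loc \<Omega> f"
      unfolding in_Linf_loc_def
    proof (intro conjI allI impI)
      show "set_borel_measurable lebesgue \<Omega> f" unfolding set_borel_measurable_def
        by (intro borel_measurable_scaleR borel_measurable_indicator \<Omega>s fm)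
      fix K assume K: "compact K \<and> K \<subseteq> \<Omega>"
      obtain \<delta> B T where \<delta>: "\<delta> > 0" and B: "B \<ge> 0"
        and ap: "\<forall>x\<in>K. \<forall>\<epsilon>. 0 < \<epsilon> \<longrightarrow> \<epsilon> \<le> \<delta> \<longrightarrow> \<bar>F \<epsilon> x - f x\<bar> \<le> B * \<epsilon> powr \<tau>"
        and T: "\<forall>x\<in>K. \<bar>F \<delta> x\<bar> \<le> T"
        using approx[OF conjunct1[OF K] conjunct2[OF K]] by blast
      have "\<bar>f x\<bar> \<le> T + B * \<delta> powr \<tau>" if "x \<in> K" for x
      proof -
        have "\<bar>F \<delta> x - f x\<bar> \<le> B * \<delta> powr \<tau>" using ap that \<delta> by blast
        moreover have "\<bar>F \<delta> x\<bar> \<le> T" using T that by blast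
        ultimately show ?thesis by linarith
      qed
      then show "\<exists>C. AE x in lebesgue. x \<in> K \<longrightarrow> \<bar>f x\<bar> \<le> C"
        by (intro exI[of _ "T + B * \<delta> powr \<tau>"] AE_I2) auto
    qed
    show "strong_solution s p \<Omega> u f"
      unfolding strong_solution_def
    proof (intro allI impI conjI)
      fix K assume K: "compact K \<and> K \<subseteq> \<Omega>"
      obtain \<delta> B T where \<delta>: "\<delta> > 0" and B: "B \<ge> 0"
        and ap: "\<forall>x\<in>K. \<forall>\<epsilon>. 0 < \<epsilon> \<longrightarrow> \<epsilon> \<le> \<delta> \<longrightarrow> \<bar>F \<epsilon> x - f x\<bar> \<le> B * \<epsilon> powr \<tau>"
        using approx[OF conjunct1[OF K] conjunct2[OF K]] by blast
      have Kf: "K \<in> fmeasurable lebesgue" using lmeasurable_compact K by blast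
      then have Kl: "K \<in> sets lebesgue" and Kfin: "emeasure lebesgue K < \<infinity>" by (auto simp: fmeasurable_def)
      have intK: "integrable lebesgue (indicator K :: 'a \<Rightarrow> real)"
        using Kl Kfin by (simp add: integrable_indicator_iff)
      have bnd: "\<bar>indicator K x * (F \<epsilon> x - f x)\<bar> \<le> B * \<epsilon> powr \<tau> * indicator K x"
        if \<epsilon>: "0 < \<epsilon>" "\<epsilon> \<le> \<delta>" for \<epsilon> x
      proof (cases "x \<in> K")
        case True then show ?thesis using ap \<epsilon> by (simp add: indicator_def)
      qed (simp add: indicator_def)
      have si: "integrable lebesgue (\<lambda>x. indicator K x * (F \<epsilon> x - f x))" if \<epsilon>: "0 < \<epsilon>" "\<epsilon> \<le> \<delta>" for \<epsilon>
      proof -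
        have m: "(\<lambda>x. indicator K x * (F \<epsilon> x - f x)) \<in> borel_measurable lebesgue"
          by (intro borel_measurable_times borel_measurable_indicator Kl borel_measurable_diff Fm fm)
        have i2: "integrable lebesgue (\<lambda>x. B * \<epsilon> powr \<tau> * indicator K x)" using intK by simp
        show ?thesis
          by (rule Bochner_Integration.integrable_bound[OF i2 m]) (use bnd[OF \<epsilon>] B in \<open>auto intro!: AE_I2\<close>)
      qed
      have ev: "eventually (\<lambda>\<epsilon>. 0 < \<epsilon> \<and> \<epsilon> \<le> \<delta>) (at_right (0::real))"
      proof -
        have "eventually (\<lambda>\<epsilon>. \<epsilon> < \<delta>) (at_right (0::real))"
          using order_tendstoD(2)[OF tendsto_ident_at \<delta>] .
        then show ?thesis using eventually_at_right_less[of "0::real"] by eventually_elim auto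
      qed
      show "\<forall>\<^sub>F \<epsilon> in at_right 0. set_integrable lebesgue K (\<lambda>x. frac_trunc s p u \<epsilon> x - f x)"
        using ev
      proof eventually_elim
        case (elim \<epsilon>)
        then show ?case using si[of \<epsilon>] unfolding set_integrable_def by (simp add: F_def)
      qed
      define \<Phi> where "\<Phi> \<epsilon> = (\<integral>x. indicator K x * \<bar>frac_trunc s p u \<epsilon> x - f x\<bar> \<partial>lebesgue)" for \<epsilon>
      have up: "eventually (\<lambda>\<epsilon>. \<Phi> \<epsilon> \<le> B * \<epsilon> powr \<tau> * measure lebesgue K) (at_right 0)"
        using ev
      proof eventually_elim
        case (elim \<epsilon>)
        have ia: "integrable lebesgue (\<lambda>x. indicator K x * \<bar>F \<epsilon> x - f x\<bar>)"
        proof -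
          have "integrable lebesgue (\<lambda>x. \<bar>indicator K x * (F \<epsilon> x - f x)\<bar>)" using si elim by auto
          then show ?thesis by (simp add: abs_mult)
        qed
        have "\<Phi> \<epsilon> = (\<integral>x. indicator K x * \<bar>F \<epsilon> x - f x\<bar> \<partial>lebesgue)" by (simp add: \<Phi>_def F_def)
        also have "\<dots> \<le> (\<integral>x. B * \<epsilon> powr \<tau> * indicator K x \<partial>lebesgue)"
          using ia intK bnd[of \<epsilon>] elim by (intro integral_mono) (auto simp: abs_mult)
        also have "\<dots> = B * \<epsilon> powr \<tau> * measure lebesgue K" by simp
        finally show ?case .
      qed
      have lo: "eventually (\<lambda>\<epsilon>. 0 \<le> \<Phi> \<epsilon>) (at_right 0)"
        by (intro always_eventually allI) (simp add: \<Phi>_def)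
      have lim0: "((\<lambda>\<epsilon>::real. B * \<epsilon> powr \<tau> * measure lebesgue K) \<longlongrightarrow> 0) (at_right 0)"
      proof -
        have "((\<lambda>\<epsilon>::real. \<epsilon> powr \<tau>) \<longlongrightarrow> 0) (at_right 0)"
          by (rule tendsto_zero_powrI[OF tendsto_ident_at tendsto_const])
            (use eventually_at_right_less[of "0::real"] \<tau>0 in \<open>auto elim: eventually_mono\<close>)
        then have "((\<lambda>\<epsilon>::real. B * \<epsilon> powr \<tau>) \<longlongrightarrow> 0) (at_right 0)" by (rule tendsto_mult_right_zero)
        then show ?thesis by (rule tendsto_mult_left_zero)
      qed
      show "((\<lambda>\<epsilon>. \<integral>x. indicator K x * \<bar>frac_trunc s p u \<epsilon> x - f x\<bar> \<partial>lebesgue) \<longlongrightarrow> 0) (at_right 0)"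
        using tendsto_sandwich[OF lo up tendsto_const lim0] unfolding \<Phi>_def .
    qed
  qed
qed

end
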